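(* Let $\lambda\in\mathbb{R}\setminus\Sigma_0$. Then $\lambda\in\bigcup_{\Theta\in[-\pi,\pi]^2}\sigma(\mathcal{A}^\Theta)$ (i.e. $\lambda\in\sigma(\mathcal A)$) if and only if there exists $(\theta_1,\theta_2)\in[-\pi,\pi]^2$ such that $$(1\ \ \rho)\,\mathbb{M}\begin{pmatrix}1\\0\end{pmatrix}-\frac{\lambda m}{3a}\,(1\ \ \rho)\,\mathbb{M}\begin{pmatrix}\rho\\1\end{pmatrix}=\pm\frac{|S(\theta_1,\theta_2)|}{3},$$ equivalently $\mathcal{D}_1(\lambda)-\frac{\lambda m}{3a}\mathcal{D}_0(\lambda)=\pm|S(\theta_1,\theta_2)|/3$.
   Context: Fix $a>0$, $\kappa^{-1}\ge 0$, $m\ge 0$, $\rho:=a\kappa^{-1}$, and a real symmetric potential $q_0\in L^\infty(0,1)$, $q_0(x)=q_0(1-x)$. The hexagonal lattice $G$ (edges of length 1, identified with $[0,1]$, potential $q_0$ on each edge) carries the Hamiltonian $\mathcal A$: $u_e\mapsto -au_e''+q_0u_e$ with vertex conditions at each vertex $v$ ($\partial_nu_e(v)$ = outward derivative: $-u_e'(0)$ at $x=0$, $u_e'(1)$ at $x=1$): $u_e(v)+\rho\,\partial_nu_e(v)=\omega_v$ for all $e\ni v$ and $a\sum_{e\ni v}\partial_nu_e(v)=\lambda m\,\omega_v$. By Floquet–Bloch theory $\sigma(\mathcal A)=\bigcup_\Theta\sigma(\mathcal A^\Theta)$, where for $\Theta=(\theta_1,\theta_2)\in[-\pi,\pi]^2$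 a real $\lambda\in\sigma(\mathcal A^\Theta)$ iff there are $u_1,u_2,u_3\in H^2(0,1)$, $\omega_0,\omega_1\in\mathbb C$, not all zero, with $-au_j''+q_0u_j=\lambda u_j$, $u_j(0)-\rho u_j'(0)=\omega_0$ ($j=1,2,3$), $-a\sum_ju_j'(0)=\lambda m\omega_0$, $u_1(1)+\rho u_1'(1)=e^{i\theta_1}(u_2(1)+\rho u_2'(1))=e^{i\theta_2}(u_3(1)+\rho u_3'(1))=\omega_1$, $a(u_1'(1)+e^{i\theta_1}u_2'(1)+e^{i\theta_2}u_3'(1))=\lambda m\omega_1$. $S(\theta_1,\theta_2):=1+e^{-i\theta_1}+e^{-i\theta_2}$. $\Sigma_0$: set of real $\lambda$ for which $-au''+q_0u=\lambda u$, $u(0)-\rho u'(0)=0$, $u(1)+\rho u'(1)=0$ has a nontrivial solution. Fundamental solutions: $c_\lambda,s_\lambda$ solve $-ay''+q_0y=\lambda y$ on $[0,1]$ with $c_\lambda(0)=1,c_\lambda'(0)=0,s_\lambda(0)=0,s_\lambda'(0)=1$; monodromy matrix $\mathbb M=\begin{pmatrix}c_\lambda(1)&s_\lambda(1)\\c_\lambda'(1)&s_\lambda'(1)\end{pmatrix}$. $\mathcal D_1(\lambda):=c_\lambda(1)+\rho c_\lambda'(1)$, $\mathcal D_2(\lambda):=s_\lambda(1)+\rho s_\lambda'(1)$, $\mathcal D_0(\lambda):=\mathcal D_2(\lambda)+\rho\mathcal D_1(\lambda)$. *)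

theory Defs
  imports "HOL-Analysis.Analysis"
begin

text \<open>Solutions of the edge equation  -a y'' + q0 y = lam y  on [0,1], in integrated
  (H^2 / absolutely continuous) form: yd is the derivative of y and yd' = ((q0 - lam)/a) y a.e.
  Both y and its derivative yd are indefinite integrals on [0,1].\<close>
definition edge_sol :: "real \<Rightarrow> (real \<Rightarrow> real) \<Rightarrow> real \<Rightarrow>
    (real \<Rightarrow> 'b::real_normed_vector) \<Rightarrow> (real \<Rightarrow> 'b) \<Rightarrow> bool" where
  "edge_sol a q0 lam y yd \<longleftrightarrow>
     (\<forall>x\<in>{0..1}. (yd has_integral (y x - y 0)) {0..x} \<and>
        ((\<lambda>t. ((q0 t - lam) / a) *\<^sub>R y t) has_integral (yd x - yd 0)) {0..x})"

definition fund_c :: "real \<Rightarrow> (real \<Rightarrow> real) \<Rightarrow> real \<Rightarrow> (real \<Rightarrow> real) \<times> (real \<Rightarrow> real)" where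
  "fund_c a q0 lam = (SOME p. edge_sol a q0 lam (fst p) (snd p) \<and> fst p 0 = 1 \<and> snd p 0 = 0)"

definition fund_s :: "real \<Rightarrow> (real \<Rightarrow> real) \<Rightarrow> real \<Rightarrow> (real \<Rightarrow> real) \<times> (real \<Rightarrow> real)" where
  "fund_s a q0 lam = (SOME p. edge_sol a q0 lam (fst p) (snd p) \<and> fst p 0 = 0 \<and> snd p 0 = 1)"

definition D1 :: "real \<Rightarrow> real \<Rightarrow> (real \<Rightarrow> real) \<Rightarrow> real \<Rightarrow> real" where
  "D1 a rho q0 lam = fst (fund_c a q0 lam) 1 + rho * snd (fund_c a q0 lam) 1"

definition D2 :: "real \<Rightarrow> real \<Rightarrow> (real \<Rightarrow> real) \<Rightarrow> real \<Rightarrow> real" where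
  "D2 a rho q0 lam = fst (fund_s a q0 lam) 1 + rho * snd (fund_s a q0 lam) 1"

definition D0 :: "real \<Rightarrow> real \<Rightarrow> (real \<Rightarrow> real) \<Rightarrow> real \<Rightarrow> real" where
  "D0 a rho q0 lam = D2 a rho q0 lam + rho * D1 a rho q0 lam"

definition Sfun :: "real \<Rightarrow> real \<Rightarrow> complex" where
  "Sfun th1 th2 = 1 + exp (- \<i> * complex_of_real th1) + exp (- \<i> * complex_of_real th2)"

definition Sigma0 :: "real \<Rightarrow> real \<Rightarrow> (real \<Rightarrow> real) \<Rightarrow> real set" where
  "Sigma0 a rho q0 = {lam. \<exists>u ud :: real \<Rightarrow> complex. edge_sol a q0 lam u ud \<and>
      u 0 - rho *\<^sub>R ud 0 = 0 \<and> u 1 + rho *\<^sub>R ud 1 = 0 \<and> (\<exists>x\<in>{0..1}. u x \<noteq> 0)}"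

text \<open>Real spectrum of the Floquet--Bloch fibre operator A^Theta.\<close>
definition spec_theta :: "real \<Rightarrow> real \<Rightarrow> real \<Rightarrow> (real \<Rightarrow> real) \<Rightarrow> real \<Rightarrow> real \<Rightarrow> real set" where
  "spec_theta a rho m q0 th1 th2 = {lam. \<exists>(u1::real\<Rightarrow>complex) u1d u2 u2d u3 u3d (w0::complex) w1.
      edge_sol a q0 lam u1 u1d \<and> edge_sol a q0 lam u2 u2d \<and> edge_sol a q0 lam u3 u3d \<and>
      u1 0 - rho *\<^sub>R u1d 0 = w0 \<and> u2 0 - rho *\<^sub>R u2d 0 = w0 \<and> u3 0 - rho *\<^sub>R u3d 0 = w0 \<and>
      - a *\<^sub>R (u1d 0 + u2d 0 + u3d 0) = (lam * m) *\<^sub>R w0 \<and>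
      u1 1 + rho *\<^sub>R u1d 1 = w1 \<and>
      exp (\<i> * complex_of_real th1) * (u2 1 + rho *\<^sub>R u2d 1) = w1 \<and>
      exp (\<i> * complex_of_real th2) * (u3 1 + rho *\<^sub>R u3d 1) = w1 \<and>
      a *\<^sub>R (u1d 1 + exp (\<i> * complex_of_real th1) * u2d 1 + exp (\<i> * complex_of_real th2) * u3d 1)
        = (lam * m) *\<^sub>R w1 \<and>
      ((\<exists>x\<in>{0..1}. u1 x \<noteq> 0 \<or> u2 x \<noteq> 0 \<or> u3 x \<noteq> 0) \<or> w0 \<noteq> 0 \<or> w1 \<noteq> 0)}"

end

theory Submission
  imports Defs
begin

locale ode =
  fixes a :: real and q0 :: "real \<Rightarrow> real" and lam :: real
  assumes apos: "a > 0"
    and meas: "q0 \<in> borel_measurable (lebesgue_on {0..1})"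
    and bnd: "\<exists>B. \<forall>x\<in>{0..1}. \<bar>q0 x\<bar> \<le> B"
begin

definition p :: "real \<Rightarrow> real" where "p t = (q0 t - lam) / a"

lemma p_meas: "p \<in> borel_measurable (lebesgue_on {0..1})"
  unfolding p_def[abs_def] using meas by measurable

lemma p_bnd: "\<exists>P\<ge>0. \<forall>x\<in>{0..1}. \<bar>p x\<bar> \<le> P"
proof -
  obtain B where B: "\<forall>x\<in>{0..1}. \<bar>q0 x\<bar> \<le> B" using bnd by blast
  have "\<bar>p x\<bar> \<le> (\<bar>B\<bar> + \<bar>lam\<bar>) / a" if "x \<in> {0..1}" for x
  proof -
    have "\<bar>q0 x - lam\<bar> \<le> \<bar>B\<bar> + \<bar>lam\<bar>" using B that by fastforce
    then show ?thesis unfolding p_def using apos by (simp add: abs_div divide_right_mono)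
  qed
  moreover have "(\<bar>B\<bar> + \<bar>lam\<bar>) / a \<ge> 0" using apos by simp
  ultimately show ?thesis by blast
qed

lemma p_integ:
  assumes h: "continuous_on {0..1} h" and x: "x \<in> {0..1}"
  shows "(\<lambda>s. p s * h s) integrable_on {0..x}"
proof -
  have "(\<lambda>s. p s * h s) absolutely_integrable_on {0..1}"
  proof (rule absolutely_integrable_bounded_measurable_product_real[OF p_meas])
    show "bounded (p ` {0..1})" using p_bnd unfolding bounded_iff
      by (metis imageE real_norm_def)
    show "h absolutely_integrable_on {0..1}"
      using absolutely_integrable_continuous_real h by auto
  qed auto
  then have "(\<lambda>s. p s * h s) integrable_on {0..1}"
    using absolutely_integrable_on_def by blast
  then show ?thesis by (rule integrable_on_subinterval) (use x in auto)
qed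

end

lemma exp_has_int:
  fixes Lw \<tau> :: real
  assumes "Lw > 0" "0 \<le> \<tau>"
  shows "((\<lambda>s. exp (Lw * s)) has_integral (exp (Lw * \<tau>) - 1) / Lw) {0..\<tau>}"
proof -
  have "((\<lambda>s. exp (Lw * s)) has_integral (exp (Lw * \<tau>)/Lw - exp (Lw*0)/Lw)) {0..\<tau>}"
    apply (rule fundamental_theorem_of_calculus[OF assms(2)])
    unfolding has_real_derivative_iff_has_vector_derivative[symmetric]
    using assms by (auto intro!: derivative_eq_intros)
  then show ?thesis by (simp add: diff_divide_distrib)
qed

lemma exp_bound:
  fixes Lw \<tau> C :: real and u :: "real \<Rightarrow> real"
  assumes Lw: "Lw > 0" and t: "0 \<le> \<tau>" and C: "C \<ge> 0" and u: "u integrable_on {0..\<tau>}"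
    and ub: "\<And>s. s \<in> {0..\<tau>} \<Longrightarrow> \<bar>u s\<bar> \<le> C * exp (Lw * s)"
  shows "\<bar>exp (-(Lw * \<tau>)) * integral {0..\<tau>} u\<bar> \<le> C / Lw"
proof -
  have hi: "((\<lambda>s. C * exp (Lw * s)) has_integral C * ((exp (Lw * \<tau>) - 1) / Lw)) {0..\<tau>}"
    using exp_has_int[OF Lw t] by (rule has_integral_mult_right)
  have "norm (integral {0..\<tau>} u) \<le> integral {0..\<tau>} (\<lambda>s. C * exp (Lw * s))"
    by (rule integral_norm_bound_integral[OF u]) (use hi ub in auto)
  also have "\<dots> = C * ((exp (Lw * \<tau>) - 1) / Lw)" using hi by (rule integral_unique)
  finally have i: "\<bar>integral {0..\<tau>} u\<bar> \<le> C * ((exp (Lw * \<tau>) - 1) / Lw)" by simp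
  have "\<bar>exp (-(Lw * \<tau>)) * integral {0..\<tau>} u\<bar> = exp (-(Lw * \<tau>)) * \<bar>integral {0..\<tau>} u\<bar>"
    by (simp add: abs_mult)
  also have "\<dots> \<le> exp (-(Lw * \<tau>)) * (C * ((exp (Lw * \<tau>) - 1) / Lw))"
    using i by (intro mult_left_mono) auto
  also have "\<dots> = C * (1 - exp (-(Lw * \<tau>))) / Lw"
    by (simp add: field_simps exp_minus)
  also have "\<dots> \<le> C / Lw" using C Lw by (simp add: divide_right_mono mult_left_le)
  finally show ?thesis .
qed

lemma ext01_ex:
  fixes f :: "real \<Rightarrow> real"
  assumes "continuous_on {0..1} f"
  shows "\<exists>g::real \<Rightarrow>\<^sub>C real. \<forall>x. g x = f (clamp 0 1 x)"
proof -
  have "continuous_on (cbox 0 1) f" using assms by simp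
  from continuous_on_cbox_bcontfunE[OF this] obtain g :: "real \<Rightarrow>\<^sub>C real"
    where "\<And>x. g x = f (clamp 0 1 x)" by metis
  then show ?thesis by blast
qed

definition ext01 :: "(real \<Rightarrow> real) \<Rightarrow> real \<Rightarrow>\<^sub>C real" where
  "ext01 f = (SOME g::real \<Rightarrow>\<^sub>C real. \<forall>x. g x = f (clamp 0 1 x))"

lemma ext01_apply: "continuous_on {0..1} f \<Longrightarrow> ext01 f x = f (clamp 0 1 x)"
  unfolding ext01_def using someI_ex[OF ext01_ex] by blast

lemma clamp01_in: "clamp 0 1 (x::real) \<in> {0..1}"
  using clamp_in_interval[of 0 1 x] by simp

lemma clamp01_id: "(x::real) \<in> {0..1} \<Longrightarrow> clamp 0 1 x = x"
  using clamp_cancel_cbox[of x 0 1] by simp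


context ode begin

definition PP where "PP = (SOME P. P \<ge> 0 \<and> (\<forall>x\<in>{0..1}. \<bar>p x\<bar> \<le> P))"

lemma PP: "PP \<ge> 0" "x \<in> {0..1} \<Longrightarrow> \<bar>p x\<bar> \<le> PP"
  using someI_ex[OF p_bnd] unfolding PP_def by auto

definition Lw where "Lw = 4 * (1 + PP)"

lemma Lw_pos: "Lw > 0" and Lw_ge: "Lw \<ge> 4 * (1 + PP)"
  unfolding Lw_def using PP by auto

definition h1 :: "real \<Rightarrow> (real \<Rightarrow>\<^sub>C real) \<Rightarrow> real \<Rightarrow> real" where
  "h1 y0 G x = exp (-(Lw * x)) * (y0 + integral {0..x} (\<lambda>s. exp (Lw * s) * G s))"

definition h2 :: "real \<Rightarrow> (real \<Rightarrow>\<^sub>C real) \<Rightarrow> real \<Rightarrow> real" where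
  "h2 yd0 F x = exp (-(Lw * x)) * (yd0 + integral {0..x} (\<lambda>s. p s * (exp (Lw * s) * F s)))"

lemma int1: "(\<lambda>s. exp (Lw * s) * apply_bcontfun G s) integrable_on {0..x}"
  by (intro integrable_continuous_interval continuous_intros) auto

lemma int2: "x \<in> {0..1} \<Longrightarrow> (\<lambda>s. p s * (exp (Lw * s) * apply_bcontfun F s)) integrable_on {0..x}"
  by (rule p_integ) (auto intro!: continuous_intros)

lemma h1_cont: "continuous_on {0..1} (h1 y0 G)"
  unfolding h1_def
  by (intro continuous_intros indefinite_integral_continuous_1 int1)

lemma h2_cont: "continuous_on {0..1} (h2 yd0 F)"
  unfolding h2_def
  by (intro continuous_intros indefinite_integral_continuous_1 int2) auto

definition TT :: "real \<Rightarrow> real \<Rightarrow> (real \<Rightarrow>\<^sub>C real) \<times> (real \<Rightarrow>\<^sub>C real) \<Rightarrow> (real \<Rightarrow>\<^sub>C real) \<times> (real \<Rightarrow>\<^sub>C real)" where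
  "TT y0 yd0 FG = (ext01 (h1 y0 (snd FG)), ext01 (h2 yd0 (fst FG)))"

lemma TT_fst: "fst (TT y0 yd0 FG) x = h1 y0 (snd FG) (clamp 0 1 x)"
  unfolding TT_def by (simp add: ext01_apply h1_cont)

lemma TT_snd: "snd (TT y0 yd0 FG) x = h2 yd0 (fst FG) (clamp 0 1 x)"
  unfolding TT_def by (simp add: ext01_apply h2_cont)

lemma TT_dist1: "dist (fst (TT y0 yd0 X) x) (fst (TT y0 yd0 Y) x) = \<bar>h1 y0 (snd X) (clamp 0 1 x) - h1 y0 (snd Y) (clamp 0 1 x)\<bar>"
  unfolding TT_fst dist_real_def by (rule refl)

lemma TT_dist2: "dist (snd (TT y0 yd0 X) x) (snd (TT y0 yd0 Y) x) = \<bar>h2 yd0 (fst X) (clamp 0 1 x) - h2 yd0 (fst Y) (clamp 0 1 x)\<bar>"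
  unfolding TT_snd dist_real_def by (rule refl)

lemma h1_diff:
  assumes t: "t \<in> {0..1}"
  shows "\<bar>h1 y0 G t - h1 y0 G' t\<bar> \<le> dist G G' / 4"
proof -
  have "\<bar>h1 y0 G t - h1 y0 G' t\<bar> = \<bar>exp (-(Lw * t)) * integral {0..t} (\<lambda>s. exp (Lw * s) * G s - exp (Lw * s) * G' s)\<bar>"
    unfolding h1_def by (simp only: integral_diff[OF int1 int1]) (simp add: algebra_simps)
  also have "\<dots> \<le> (dist G G') / Lw"
  proof (rule exp_bound[OF Lw_pos])
    show "0 \<le> t" "0 \<le> (dist G G')" using t by auto
    show "(\<lambda>s. exp (Lw * s) * G s - exp (Lw * s) * G' s) integrable_on {0..t}"
      by (intro integrable_diff int1)
    fix s assume "s \<in> {0..t}"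
    have "\<bar>G s - G' s\<bar> \<le> (dist G G')" using dist_bounded[of G s G'] by (simp add:  dist_real_def)
    have "\<bar>exp (Lw * s) * G s - exp (Lw * s) * G' s\<bar> = exp (Lw * s) * \<bar>G s - G' s\<bar>"
      by (simp add: abs_mult right_diff_distrib[symmetric])
    also have "\<dots> \<le> exp (Lw * s) * (dist G G')" using \<open>\<bar>G s - G' s\<bar> \<le> (dist G G')\<close> by (intro mult_left_mono) auto
    also have "\<dots> = (dist G G') * exp (Lw * s)" by simp
    finally show "\<bar>exp (Lw * s) * G s - exp (Lw * s) * G' s\<bar> \<le> (dist G G') * exp (Lw * s)" .
  qed
  also have "\<dots> \<le> (dist G G') / 4" using Lw_ge PP(1) by (intro divide_left_mono) auto
  finally show ?thesis .
qed

lemma h2_diff: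
  assumes t: "t \<in> {0..1}"
  shows "\<bar>h2 yd0 F t - h2 yd0 F' t\<bar> \<le> dist F F' / 4"
proof -
  have "\<bar>h2 yd0 F t - h2 yd0 F' t\<bar> = \<bar>exp (-(Lw * t)) * integral {0..t} (\<lambda>s. p s * (exp (Lw * s) * F s) - p s * (exp (Lw * s) * F' s))\<bar>"
    unfolding h2_def by (simp only: integral_diff[OF int2[OF t] int2[OF t]]) (simp add: algebra_simps)
  also have "\<dots> \<le> (PP * (dist F F')) / Lw"
  proof (rule exp_bound[OF Lw_pos])
    show "0 \<le> t" "0 \<le> PP * (dist F F')" using t PP(1) by auto
    show "(\<lambda>s. p s * (exp (Lw * s) * F s) - p s * (exp (Lw * s) * F' s)) integrable_on {0..t}"
      by (intro integrable_diff int2 t)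
    fix s assume s: "s \<in> {0..t}"
    then have s1: "s \<in> {0..1}" using t by auto
    have "\<bar>F s - F' s\<bar> \<le> (dist F F')" using dist_bounded[of F s F'] by (simp add:  dist_real_def)
    moreover have "\<bar>p s\<bar> \<le> PP" using PP(2)[OF s1] .
    ultimately have "\<bar>p s\<bar> * \<bar>F s - F' s\<bar> \<le> PP * (dist F F')" by (intro mult_mono) auto
    then have le: "exp (Lw * s) * (\<bar>p s\<bar> * \<bar>F s - F' s\<bar>) \<le> exp (Lw * s) * (PP * (dist F F'))" by (intro mult_left_mono) auto
    have "\<bar>p s * (exp (Lw * s) * F s) - p s * (exp (Lw * s) * F' s)\<bar> = exp (Lw * s) * (\<bar>p s\<bar> * \<bar>F s - F' s\<bar>)"
    proof -
      have "p s * (exp (Lw * s) * F s) - p s * (exp (Lw * s) * F' s) = exp (Lw * s) * (p s * (F s - F' s))"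
        by (simp add: algebra_simps)
      then show ?thesis by (simp add: abs_mult)
    qed
    also have "\<dots> \<le> exp (Lw * s) * (PP * (dist F F'))" by (rule le)
    also have "\<dots> = PP * (dist F F') * exp (Lw * s)" by simp
    finally show "\<bar>p s * (exp (Lw * s) * F s) - p s * (exp (Lw * s) * F' s)\<bar> \<le> PP * (dist F F') * exp (Lw * s)" .
  qed
  also have "\<dots> \<le> (dist F F') / 4"
  proof -
    have D0: "(dist F F') \<ge> 0" by simp
    have "PP * (dist F F') \<le> (dist F F') / 4 * Lw" unfolding Lw_def using D0 by (simp add: algebra_simps)
    then show ?thesis by (subst pos_divide_le_eq[OF Lw_pos])
  qed
  finally show ?thesis .
qed

lemma contr1: "dist (fst (TT y0 yd0 X)) (fst (TT y0 yd0 Y)) \<le> dist (snd X) (snd Y) / 4"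
  by (rule dist_bound) (simp only: TT_dist1 h1_diff clamp01_in)

lemma contr2: "dist (snd (TT y0 yd0 X)) (snd (TT y0 yd0 Y)) \<le> dist (fst X) (fst Y) / 4"
  by (rule dist_bound) (simp only: TT_dist2 h2_diff clamp01_in)

lemma contr: "dist (TT y0 yd0 X) (TT y0 yd0 Y) \<le> 1/2 * dist X Y"
proof -
  have "dist (TT y0 yd0 X) (TT y0 yd0 Y) \<le> dist (fst (TT y0 yd0 X)) (fst (TT y0 yd0 Y)) + dist (snd (TT y0 yd0 X)) (snd (TT y0 yd0 Y))"
    by (metis dist_Pair_Pair prod.collapse sqrt_sum_squares_le_sum zero_le_dist)
  also have "\<dots> \<le> dist (snd X) (snd Y) / 4 + dist (fst X) (fst Y) / 4"
    using contr1 contr2 by (rule add_mono)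
  also have "\<dots> \<le> dist X Y / 4 + dist X Y / 4"
    by (intro add_mono divide_right_mono dist_snd_le dist_fst_le) auto
  finally show ?thesis by simp
qed

lemma TT_fix: "\<exists>!X. TT y0 yd0 X = X"
  by (rule banach_fix_type[of "1/2"]) (use contr in auto)

end

lemma edge_sol_cont:
  fixes y yd :: "real \<Rightarrow> 'b::banach"
  assumes "edge_sol a q0 lam y yd"
  shows "continuous_on {0..1} y" "continuous_on {0..1} yd"
proof -
  have h: "\<And>x. x \<in> {0..1} \<Longrightarrow> (yd has_integral (y x - y 0)) {0..x}"
     "\<And>x. x \<in> {0..1} \<Longrightarrow> ((\<lambda>t. ((q0 t - lam) / a) *\<^sub>R y t) has_integral (yd x - yd 0)) {0..x}"
    using assms unfolding edge_sol_def by auto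
  have i1: "yd integrable_on {0..1}" using h(1)[of 1] by auto
  have i2: "(\<lambda>t. ((q0 t - lam) / a) *\<^sub>R y t) integrable_on {0..1}" using h(2)[of 1] by auto
  have "continuous_on {0..1} (\<lambda>x. y 0 + integral {0..x} yd)"
    by (intro continuous_intros indefinite_integral_continuous_1 i1)
  moreover have "y 0 + integral {0..x} yd = y x" if "x \<in> {0..1}" for x
    using integral_unique[OF h(1)[OF that]] by simp
  ultimately show "continuous_on {0..1} y" by (rule continuous_on_eq)
  have "continuous_on {0..1} (\<lambda>x. yd 0 + integral {0..x} (\<lambda>t. ((q0 t - lam) / a) *\<^sub>R y t))"
    by (intro continuous_intros indefinite_integral_continuous_1 i2)
  moreover have "yd 0 + integral {0..x} (\<lambda>t. ((q0 t - lam) / a) *\<^sub>R y t) = yd x" if "x \<in> {0..1}" for x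
    using integral_unique[OF h(2)[OF that]] by simp
  ultimately show "continuous_on {0..1} yd" by (rule continuous_on_eq)
qed

context ode begin

lemma fix_sol:
  assumes fx: "TT y0 yd0 (F, G) = (F, G)"
  shows "edge_sol a q0 lam (\<lambda>x. exp (Lw * x) * F x) (\<lambda>x. exp (Lw * x) * G x)
    \<and> exp (Lw * 0) * F 0 = y0 \<and> exp (Lw * 0) * G 0 = yd0"
proof -
  have F: "F x = h1 y0 G x" if "x \<in> {0..1}" for x
    using TT_fst[of y0 yd0 "(F,G)" x] fx clamp01_id[OF that] by simp
  have G: "G x = h2 yd0 F x" if "x \<in> {0..1}" for x
    using TT_snd[of y0 yd0 "(F,G)" x] fx clamp01_id[OF that] by simp
  have y: "exp (Lw * x) * F x = y0 + integral {0..x} (\<lambda>s. exp (Lw * s) * G s)" if "x \<in> {0..1}" for x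
    using F[OF that] unfolding h1_def by (simp add: exp_minus field_simps)
  have yd: "exp (Lw * x) * G x = yd0 + integral {0..x} (\<lambda>s. p s * (exp (Lw * s) * F s))" if "x \<in> {0..1}" for x
    using G[OF that] unfolding h2_def by (simp add: exp_minus field_simps)
  have y00: "exp (Lw * 0) * F 0 = y0" using y[of 0] by simp
  have yd00: "exp (Lw * 0) * G 0 = yd0" using yd[of 0] by simp
  have fe: "(\<lambda>t. ((q0 t - lam) / a) *\<^sub>R (exp (Lw * t) * F t)) = (\<lambda>s. p s * (exp (Lw * s) * F s))"
    by (simp add: p_def)
  have "edge_sol a q0 lam (\<lambda>x. exp (Lw * x) * F x) (\<lambda>x. exp (Lw * x) * G x)"
    unfolding edge_sol_def
  proof (intro ballI conjI)
    fix x :: real assume x: "x \<in> {0..1}"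
    show "((\<lambda>x. exp (Lw * x) * G x) has_integral (exp (Lw * x) * F x - exp (Lw * 0) * F 0)) {0..x}"
      using y[OF x] y00 integrable_integral[OF int1[of G x]] by simp
    show "((\<lambda>t. ((q0 t - lam) / a) *\<^sub>R (exp (Lw * t) * F t)) has_integral (exp (Lw * x) * G x - exp (Lw * 0) * G 0)) {0..x}"
      unfolding fe using yd[OF x] yd00 integrable_integral[OF int2[OF x, of F]] by simp
  qed
  then show ?thesis using y00 yd00 by blast
qed

lemma sol_fix:
  fixes y yd :: "real \<Rightarrow> real"
  assumes sol: "edge_sol a q0 lam y yd"
  shows "\<exists>FG. TT (y 0) (yd 0) FG = FG \<and> (\<forall>x\<in>{0..1}. y x = exp (Lw * x) * fst FG x \<and> yd x = exp (Lw * x) * snd FG x)"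
proof -
  have h: "\<And>x. x \<in> {0..1} \<Longrightarrow> (yd has_integral (y x - y 0)) {0..x}"
     "\<And>x. x \<in> {0..1} \<Longrightarrow> ((\<lambda>t. ((q0 t - lam) / a) *\<^sub>R y t) has_integral (yd x - yd 0)) {0..x}"
    using sol unfolding edge_sol_def by auto
  have cy: "continuous_on {0..1} (\<lambda>x. exp (-(Lw * x)) * y x)"
    by (intro continuous_intros edge_sol_cont[OF sol])
  have cyd: "continuous_on {0..1} (\<lambda>x. exp (-(Lw * x)) * yd x)"
    by (intro continuous_intros edge_sol_cont[OF sol])
  define F where "F = ext01 (\<lambda>x. exp (-(Lw * x)) * y x)"
  define G where "G = ext01 (\<lambda>x. exp (-(Lw * x)) * yd x)"
  have Fx: "F x = exp (-(Lw * clamp 0 1 x)) * y (clamp 0 1 x)" for x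
    unfolding F_def by (simp add: ext01_apply[OF cy])
  have Gx: "G x = exp (-(Lw * clamp 0 1 x)) * yd (clamp 0 1 x)" for x
    unfolding G_def by (simp add: ext01_apply[OF cyd])
  have F01: "F x = exp (-(Lw * x)) * y x" if "x \<in> {0..1}" for x
    using Fx[of x] clamp01_id[OF that] by simp
  have G01: "G x = exp (-(Lw * x)) * yd x" if "x \<in> {0..1}" for x
    using Gx[of x] clamp01_id[OF that] by simp
  have i1: "integral {0..c} (\<lambda>s. exp (Lw * s) * G s) = y c - y 0" if c: "c \<in> {0..1}" for c
  proof -
    have "integral {0..c} (\<lambda>s. exp (Lw * s) * G s) = integral {0..c} yd"
      by (rule integral_cong) (use c in \<open>simp add: G01 exp_minus\<close>)
    then show ?thesis using h(1)[OF c] integral_unique by simp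
  qed
  have i2: "integral {0..c} (\<lambda>s. p s * (exp (Lw * s) * F s)) = yd c - yd 0" if c: "c \<in> {0..1}" for c
  proof -
    have "integral {0..c} (\<lambda>s. p s * (exp (Lw * s) * F s)) = integral {0..c} (\<lambda>t. ((q0 t - lam) / a) *\<^sub>R y t)"
      by (rule integral_cong) (use c in \<open>simp add: F01 exp_minus p_def\<close>)
    also have "\<dots> = yd c - yd 0" using h(2)[OF c] by (rule integral_unique)
    finally show ?thesis .
  qed
  have "TT (y 0) (yd 0) (F, G) = (F, G)"
  proof -
    have "fst (TT (y 0) (yd 0) (F, G)) = F"
    proof (rule bcontfun_eqI)
      fix x :: real
      have c: "clamp 0 1 x \<in> {0..1}" by (rule clamp01_in)
      show "fst (TT (y 0) (yd 0) (F, G)) x = F x"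
        unfolding TT_fst Fx h1_def snd_conv i1[OF c] by simp
    qed
    moreover have "snd (TT (y 0) (yd 0) (F, G)) = G"
    proof (rule bcontfun_eqI)
      fix x :: real
      have c: "clamp 0 1 x \<in> {0..1}" by (rule clamp01_in)
      show "snd (TT (y 0) (yd 0) (F, G)) x = G x"
        unfolding TT_snd Gx h2_def fst_conv i2[OF c] by simp
    qed
    ultimately show ?thesis by (metis prod.collapse)
  qed
  moreover have "\<forall>x\<in>{0..1}. y x = exp (Lw * x) * fst (F, G) x \<and> yd x = exp (Lw * x) * snd (F, G) x"
    by (simp add: F01 G01 exp_minus)
  ultimately show ?thesis by blast
qed

lemma real_exists:
  "\<exists>y yd :: real \<Rightarrow> real. edge_sol a q0 lam y yd \<and> y 0 = y0 \<and> yd 0 = yd0"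
proof -
  obtain FG where "TT y0 yd0 FG = FG" using TT_fix by blast
  then have "TT y0 yd0 (fst FG, snd FG) = (fst FG, snd FG)" by simp
  from fix_sol[OF this] show ?thesis by blast
qed

lemma real_unique:
  fixes y yd y' yd' :: "real \<Rightarrow> real"
  assumes "edge_sol a q0 lam y yd" "edge_sol a q0 lam y' yd'" "y 0 = y' 0" "yd 0 = yd' 0"
    and x: "x \<in> {0..1}"
  shows "y x = y' x \<and> yd x = yd' x"
proof -
  obtain FG where 1: "TT (y 0) (yd 0) FG = FG" "\<forall>x\<in>{0..1}. y x = exp (Lw * x) * fst FG x \<and> yd x = exp (Lw * x) * snd FG x"
    using sol_fix[OF assms(1)] by blast
  obtain FG' where 2: "TT (y 0) (yd 0) FG' = FG'" "\<forall>x\<in>{0..1}. y' x = exp (Lw * x) * fst FG' x \<and> yd' x = exp (Lw * x) * snd FG' x"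
    using sol_fix[OF assms(2)] assms(3,4) by auto
  have "FG = FG'" using TT_fix[of "y 0" "yd 0"] 1(1) 2(1) by blast
  then show ?thesis using 1(2) 2(2) x by auto
qed

end

lemma int_diff_gen:
  fixes f :: "real \<Rightarrow> 'b::banach"
  assumes t: "(f has_integral (F t - F 0)) {0..t}" and s: "(f has_integral (F s - F 0)) {0..s}"
    and st: "0 \<le> s" "s \<le> t"
  shows "(f has_integral (F t - F s)) {s..t}"
proof -
  have it: "f integrable_on {0..t}" using t by auto
  have i: "f integrable_on {s..t}" by (rule integrable_on_subinterval[OF it]) (use st in auto)
  have "integral {0..s} f + integral {s..t} f = integral {0..t} f"
    by (rule Henstock_Kurzweil_Integration.integral_combine) (use st it in auto)
  then have "integral {s..t} f = F t - F s"
    using integral_unique[OF t] integral_unique[OF s] by (simp add: algebra_simps)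
  then show ?thesis using integrable_integral[OF i] by simp
qed

lemma int_bound_gen:
  fixes f :: "real \<Rightarrow> real"
  assumes f: "(f has_integral i) {s..t}" and st: "s \<le> t" and b: "\<And>r. r \<in> {s..t} \<Longrightarrow> \<bar>f r\<bar> \<le> M"
  shows "\<bar>i\<bar> \<le> M * (t - s)"
proof -
  have M: "0 \<le> M" using b[of s] st by auto
  have "norm i \<le> M * Henstock_Kurzweil_Integration.content {s..t}"
    by (rule has_integral_bound_real[OF M _ f, of "{}"]) (use b in auto)
  then show ?thesis using st by (simp add: content_real)
qed

lemma abs_prod_le:
  fixes u v A B :: real
  assumes "\<bar>u\<bar> \<le> A" "\<bar>v\<bar> \<le> B"
  shows "\<bar>u * v\<bar> \<le> A * B"
  using assms by (simp add: abs_mult mult_mono')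

lemma const_from_quad:
  fixes W :: "real \<Rightarrow> real"
  assumes C: "C \<ge> 0" and q: "\<And>s t. 0 \<le> s \<Longrightarrow> s \<le> t \<Longrightarrow> t \<le> 1 \<Longrightarrow> \<bar>W t - W s\<bar> \<le> C * (t - s)^2"
    and x: "x \<in> {0..1}"
  shows "W x = W 0"
proof (rule ccontr)
  assume ne: "W x \<noteq> W 0"
  define d where "d = \<bar>W x - W 0\<bar>"
  have d: "d > 0" using ne by (simp add: d_def)
  have bnd: "d \<le> C / real n" if n: "n > 0" for n :: nat
  proof -
    define g where "g k = W (x * real k / real n)" for k :: nat
    have "(\<Sum>k<n. g (Suc k) - g k) = g n - g 0" by (rule sum_lessThan_telescope)
    moreover have "g n = W x" "g 0 = W 0" unfolding g_def using n by auto
    ultimately have "W x - W 0 = (\<Sum>k<n. g (Suc k) - g k)" by simp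
    then have "d \<le> (\<Sum>k<n. \<bar>g (Suc k) - g k\<bar>)"
      unfolding d_def by (simp add: sum_abs)
    also have "\<dots> \<le> (\<Sum>k<n. C * (x / real n)^2)"
    proof (rule sum_mono)
      fix k assume k: "k \<in> {..<n}"
      have "x * real k / real n \<le> x * real (Suc k) / real n"
        using x n by (intro divide_right_mono mult_left_mono) auto
      moreover have "x * real (Suc k) / real n \<le> 1"
      proof -
        have "x * real (Suc k) \<le> 1 * real n" using x k by (intro mult_mono) auto
        then show ?thesis using n by (simp add: divide_le_eq)
      qed
      moreover have "0 \<le> x * real k / real n" using x by auto
      ultimately have "\<bar>g (Suc k) - g k\<bar> \<le> C * (x * real (Suc k) / real n - x * real k / real n)^2"
        unfolding g_def by (intro q) auto
      also have "x * real (Suc k) / real n - x * real k / real n = x / real n"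
        by (simp add: diff_divide_distrib[symmetric] algebra_simps)
      finally show "\<bar>g (Suc k) - g k\<bar> \<le> C * (x / real n)^2" .
    qed
    also have "\<dots> = C * x^2 / real n"
      using n by (simp add: power2_eq_square field_simps)
    also have "\<dots> \<le> C / real n"
    proof -
      have "x^2 \<le> 1" using x by (simp add: power_le_one)
      then have "C * x^2 \<le> C * 1" using C by (intro mult_left_mono) auto
      then show ?thesis by (simp add: divide_right_mono)
    qed
    finally show ?thesis .
  qed
  obtain n :: nat where n: "C / d < real n" using reals_Archimedean2 by blast
  have n0: "n > 0" using n C d by (metis divide_nonneg_pos not_gr_zero of_nat_0 order.strict_trans1 less_irrefl)
  have "d \<le> C / real n" by (rule bnd[OF n0])
  moreover have "C / real n < d" using n d n0 by (simp add: divide_less_eq mult.commute pos_divide_less_eq)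
  ultimately show False by simp
qed

context ode begin

lemma sol_fun_eq: "(\<lambda>t. ((q0 t - lam) / a) *\<^sub>R (y::real\<Rightarrow>real) t) = (\<lambda>r. p r * y r)"
  by (simp add: p_def fun_eq_iff)

lemma incr:
  fixes y yd :: "real \<Rightarrow> real"
  assumes sol: "edge_sol a q0 lam y yd" and st: "0 \<le> s" "s \<le> t" "t \<le> 1"
  shows "(yd has_integral (y t - y s)) {s..t}" "((\<lambda>r. p r * y r) has_integral (yd t - yd s)) {s..t}"
proof -
  have h: "\<And>x. x \<in> {0..1} \<Longrightarrow> (yd has_integral (y x - y 0)) {0..x}"
     "\<And>x. x \<in> {0..1} \<Longrightarrow> ((\<lambda>r. p r * y r) has_integral (yd x - yd 0)) {0..x}"
    using sol unfolding edge_sol_def sol_fun_eq by auto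
  show "(yd has_integral (y t - y s)) {s..t}"
    by (rule int_diff_gen[OF h(1) h(1) st(1,2)]) (use st in auto)
  show "((\<lambda>r. p r * y r) has_integral (yd t - yd s)) {s..t}"
    by (rule int_diff_gen[OF h(2) h(2) st(1,2)]) (use st in auto)
qed

lemma lip:
  fixes y yd :: "real \<Rightarrow> real"
  assumes sol: "edge_sol a q0 lam y yd" and B: "\<forall>r\<in>{0..1}. \<bar>y r\<bar> \<le> B \<and> \<bar>yd r\<bar> \<le> B"
    and st: "0 \<le> s" "s \<le> t" "t \<le> 1"
  shows "\<bar>y t - y s\<bar> \<le> B * (t - s)" "\<bar>yd t - yd s\<bar> \<le> (PP * B) * (t - s)"
proof -
  show "\<bar>y t - y s\<bar> \<le> B * (t - s)"
    by (rule int_bound_gen[OF incr(1)[OF sol st] st(2)]) (use B st in auto)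
  show "\<bar>yd t - yd s\<bar> \<le> (PP * B) * (t - s)"
  proof (rule int_bound_gen[OF incr(2)[OF sol st] st(2)])
    fix r assume r: "r \<in> {s..t}"
    then have r1: "r \<in> {0..1}" using st by auto
    show "\<bar>p r * y r\<bar> \<le> PP * B" by (rule abs_prod_le) (use PP(2)[OF r1] B r1 in auto)
  qed
qed

lemma sol_bound:
  fixes y yd :: "real \<Rightarrow> real"
  assumes sol: "edge_sol a q0 lam y yd"
  shows "\<exists>B\<ge>0. \<forall>r\<in>{0..1}. \<bar>y r\<bar> \<le> B \<and> \<bar>yd r\<bar> \<le> B"
proof -
  obtain B1 where B1: "B1 \<ge> 0" "\<And>x. x \<in> {0..1} \<Longrightarrow> norm (y x) \<le> B1"
    using continuous_on_compact_bound[OF compact_Icc edge_sol_cont(1)[OF sol]] by blast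
  obtain B2 where B2: "B2 \<ge> 0" "\<And>x. x \<in> {0..1} \<Longrightarrow> norm (yd x) \<le> B2"
    using continuous_on_compact_bound[OF compact_Icc edge_sol_cont(2)[OF sol]] by blast
  show ?thesis
    by (rule exI[of _ "B1 + B2"]) (use B1 B2 in \<open>fastforce\<close>)
qed

lemma wronski:
  fixes y1 yd1 y2 yd2 :: "real \<Rightarrow> real"
  assumes sol1: "edge_sol a q0 lam y1 yd1" and sol2: "edge_sol a q0 lam y2 yd2"
    and x: "x \<in> {0..1}"
  shows "y1 x * yd2 x - yd1 x * y2 x = y1 0 * yd2 0 - yd1 0 * y2 0"
proof -
  obtain B1 where B1: "B1 \<ge> 0" "\<forall>r\<in>{0..1}. \<bar>y1 r\<bar> \<le> B1 \<and> \<bar>yd1 r\<bar> \<le> B1"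
    using sol_bound[OF sol1] by blast
  obtain B2 where B2: "B2 \<ge> 0" "\<forall>r\<in>{0..1}. \<bar>y2 r\<bar> \<le> B2 \<and> \<bar>yd2 r\<bar> \<le> B2"
    using sol_bound[OF sol2] by blast
  define B where "B = B1 + B2"
  have B0: "B \<ge> 0" using B1 B2 by (simp add: B_def)
  have Bb: "\<forall>r\<in>{0..1}. \<bar>y1 r\<bar> \<le> B \<and> \<bar>yd1 r\<bar> \<le> B \<and> \<bar>y2 r\<bar> \<le> B \<and> \<bar>yd2 r\<bar> \<le> B"
    using B1 B2 unfolding B_def by fastforce
  have Bb1: "\<forall>r\<in>{0..1}. \<bar>y1 r\<bar> \<le> B \<and> \<bar>yd1 r\<bar> \<le> B" using Bb by blast
  have Bb2: "\<forall>r\<in>{0..1}. \<bar>y2 r\<bar> \<le> B \<and> \<bar>yd2 r\<bar> \<le> B" using Bb by blast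
  define W where "W r = y1 r * yd2 r - yd1 r * y2 r" for r
  have q: "\<bar>W t - W s\<bar> \<le> (6 * PP * B * B) * (t - s)^2" if st: "0 \<le> s" "s \<le> t" "t \<le> 1" for s t
  proof -
    define h where "h = t - s"
    have h0: "h \<ge> 0" using st by (simp add: h_def)
    have s1: "s \<in> {0..1}" using st by auto
    define A1 where "A1 = y1 t - y1 s" define A2 where "A2 = y2 t - y2 s"
    define E1 where "E1 = yd1 t - yd1 s" define E2 where "E2 = yd2 t - yd2 s"
    have lA1: "\<bar>A1\<bar> \<le> B * h" unfolding A1_def h_def by (rule lip(1)[OF sol1 Bb1 st])
    have lA2: "\<bar>A2\<bar> \<le> B * h" unfolding A2_def h_def by (rule lip(1)[OF sol2 Bb2 st])
    have lE1: "\<bar>E1\<bar> \<le> (PP * B) * h" unfolding E1_def h_def by (rule lip(2)[OF sol1 Bb1 st])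
    have lE2: "\<bar>E2\<bar> \<le> (PP * B) * h" unfolding E2_def h_def by (rule lip(2)[OF sol2 Bb2 st])
    have ident: "W t - W s = (y1 s * E2 - y2 s * E1) + (yd2 s * A1 - yd1 s * A2) + A1 * E2 - E1 * A2"
      unfolding W_def A1_def A2_def E1_def E2_def by (simp add: algebra_simps)
    have I1: "((\<lambda>r. y1 s * (p r * y2 r) - y2 s * (p r * y1 r)) has_integral (y1 s * E2 - y2 s * E1)) {s..t}"
      unfolding E1_def E2_def
      by (intro has_integral_diff has_integral_mult_right incr[OF sol1 st] incr[OF sol2 st])
    have I2: "((\<lambda>r. yd2 s * yd1 r - yd1 s * yd2 r) has_integral (yd2 s * A1 - yd1 s * A2)) {s..t}"
      unfolding A1_def A2_def
      by (intro has_integral_diff has_integral_mult_right incr[OF sol1 st] incr[OF sol2 st])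
    have bI1: "\<bar>y1 s * E2 - y2 s * E1\<bar> \<le> (2 * PP * B * B * h) * (t - s)"
    proof (rule int_bound_gen[OF I1 st(2)])
      fix r assume r: "r \<in> {s..t}"
      then have r1: "r \<in> {0..1}" and sr: "0 \<le> s" "s \<le> r" "r \<le> 1" using st by auto
      have rh: "r - s \<le> h" using r by (simp add: h_def)
      have a: "\<bar>y2 r - y2 s\<bar> \<le> B * h"
        using lip(1)[OF sol2 Bb2 sr] rh B0 by (meson mult_left_mono order_trans)
      have b: "\<bar>y1 r - y1 s\<bar> \<le> B * h"
        using lip(1)[OF sol1 Bb1 sr] rh B0 by (meson mult_left_mono order_trans)
      have "\<bar>y1 s * (y2 r - y2 s)\<bar> \<le> B * (B * h)" by (rule abs_prod_le) (use Bb s1 a in auto)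
      moreover have "\<bar>y2 s * (y1 r - y1 s)\<bar> \<le> B * (B * h)" by (rule abs_prod_le) (use Bb s1 b in auto)
      ultimately have c: "\<bar>y1 s * y2 r - y2 s * y1 r\<bar> \<le> 2 * (B * (B * h))"
        by (simp add: algebra_simps abs_triangle_ineq4 [THEN order_trans])
      have "\<bar>p r * (y1 s * y2 r - y2 s * y1 r)\<bar> \<le> PP * (2 * (B * (B * h)))"
        by (rule abs_prod_le) (use PP(2)[OF r1] c in auto)
      moreover have "y1 s * (p r * y2 r) - y2 s * (p r * y1 r) = p r * (y1 s * y2 r - y2 s * y1 r)"
        by (simp add: algebra_simps)
      ultimately show "\<bar>y1 s * (p r * y2 r) - y2 s * (p r * y1 r)\<bar> \<le> 2 * PP * B * B * h"
        by (simp add: algebra_simps)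
    qed
    have bI2: "\<bar>yd2 s * A1 - yd1 s * A2\<bar> \<le> (2 * PP * B * B * h) * (t - s)"
    proof (rule int_bound_gen[OF I2 st(2)])
      fix r assume r: "r \<in> {s..t}"
      then have r1: "r \<in> {0..1}" and sr: "0 \<le> s" "s \<le> r" "r \<le> 1" using st by auto
      have rh: "r - s \<le> h" using r by (simp add: h_def)
      have PB: "PP * B \<ge> 0" using PP(1) B0 by simp
      have a: "\<bar>yd1 r - yd1 s\<bar> \<le> (PP * B) * h"
        using lip(2)[OF sol1 Bb1 sr] rh PB by (meson mult_left_mono order_trans)
      have b: "\<bar>yd2 r - yd2 s\<bar> \<le> (PP * B) * h"
        using lip(2)[OF sol2 Bb2 sr] rh PB by (meson mult_left_mono order_trans)
      have "\<bar>yd2 s * (yd1 r - yd1 s)\<bar> \<le> B * ((PP * B) * h)" by (rule abs_prod_le) (use Bb s1 a in auto)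
      moreover have "\<bar>yd1 s * (yd2 r - yd2 s)\<bar> \<le> B * ((PP * B) * h)" by (rule abs_prod_le) (use Bb s1 b in auto)
      ultimately have c: "\<bar>yd2 s * yd1 r - yd1 s * yd2 r\<bar> \<le> 2 * (B * ((PP * B) * h))"
        by (simp add: algebra_simps abs_triangle_ineq4 [THEN order_trans])
      then show "\<bar>yd2 s * yd1 r - yd1 s * yd2 r\<bar> \<le> 2 * PP * B * B * h"
        by (simp add: algebra_simps)
    qed
    have bP1: "\<bar>A1 * E2\<bar> \<le> (B * h) * ((PP * B) * h)" by (rule abs_prod_le[OF lA1 lE2])
    have bP2: "\<bar>E1 * A2\<bar> \<le> ((PP * B) * h) * (B * h)" by (rule abs_prod_le[OF lE1 lA2])
    have "\<bar>W t - W s\<bar> \<le> \<bar>y1 s * E2 - y2 s * E1\<bar> + \<bar>yd2 s * A1 - yd1 s * A2\<bar> + \<bar>A1 * E2\<bar> + \<bar>E1 * A2\<bar>"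
      unfolding ident by linarith
    also have "\<dots> \<le> (2 * PP * B * B * h) * h + (2 * PP * B * B * h) * h + (B * h) * ((PP * B) * h) + ((PP * B) * h) * (B * h)"
      using bI1 bI2 bP1 bP2 unfolding h_def by linarith
    also have "\<dots> = (6 * PP * B * B) * h^2" by (simp add: power2_eq_square algebra_simps)
    finally show ?thesis unfolding h_def .
  qed
  have "W x = W 0"
    by (rule const_from_quad[OF _ q x]) (use PP(1) B0 in auto)
  then show ?thesis unfolding W_def .
qed

end

lemma reflect_int:
  fixes f :: "real \<Rightarrow> 'b::real_normed_vector"
  assumes f: "(f has_integral i) {1-x..1}"
  shows "((\<lambda>s. f (1 - s)) has_integral i) {0..x}"
proof -
  have f': "(f has_integral i) (cbox (1-x) 1)" using f by simp
  have "((\<lambda>s. f ((-1) *\<^sub>R s + 1)) has_integral (1 / \<bar>-1\<bar> ^ DIM(real)) *\<^sub>R i)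
      ((\<lambda>s. (1 / (-1)) *\<^sub>R s + - ((1 / (-1)) *\<^sub>R 1)) ` cbox (1-x) 1)"
    by (rule has_integral_affinity[OF f']) simp
  moreover have "(\<lambda>s. (1 / (-1)) *\<^sub>R s + - ((1 / (-1)) *\<^sub>R 1)) ` cbox (1-x) (1::real) = {0..x}"
  proof -
    have "(\<lambda>s::real. (1 / (-1)) *\<^sub>R s + - ((1 / (-1)) *\<^sub>R 1)) = (\<lambda>s. 1 - s)" by auto
    moreover have "(\<lambda>s::real. 1 - s) ` {1-x..1} = {0..x}"
    proof
      show "(\<lambda>s::real. 1 - s) ` {1-x..1} \<subseteq> {0..x}" by auto
      show "{0..x} \<subseteq> (\<lambda>s::real. 1 - s) ` {1-x..1}"
      proof
        fix z assume "z \<in> {0..x}"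
        then have "1 - z \<in> {1-x..1}" "z = 1 - (1 - z)" by auto
        then show "z \<in> (\<lambda>s::real. 1 - s) ` {1-x..1}" by blast
      qed
    qed
    ultimately show ?thesis by simp
  qed
  moreover have "(\<lambda>s::real. (-1) *\<^sub>R s + 1) = (\<lambda>s. 1 - s)" by auto
  ultimately show ?thesis by simp
qed

context ode begin

lemma reflect_sol:
  fixes y yd :: "real \<Rightarrow> real"
  assumes sym: "\<forall>x\<in>{0..1}. q0 x = q0 (1 - x)" and sol: "edge_sol a q0 lam y yd"
  shows "edge_sol a q0 lam (\<lambda>x. y (1 - x)) (\<lambda>x. - yd (1 - x))"
  unfolding edge_sol_def
proof (intro ballI conjI)
  fix x :: real assume x: "x \<in> {0..1}"
  have st: "0 \<le> 1 - x" "1 - x \<le> 1" "(1::real) \<le> 1" using x by auto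
  have "((\<lambda>s. yd (1 - s)) has_integral (y 1 - y (1 - x))) {0..x}"
    by (rule reflect_int[OF incr(1)[OF sol st]])
  from has_integral_neg[OF this]
  show "((\<lambda>x. - yd (1 - x)) has_integral (y (1 - x) - y (1 - 0))) {0..x}" by simp
  have "((\<lambda>s. p (1 - s) * y (1 - s)) has_integral (yd 1 - yd (1 - x))) {0..x}"
    by (rule reflect_int[OF incr(2)[OF sol st]])
  then have "((\<lambda>t. ((q0 t - lam) / a) *\<^sub>R y (1 - t)) has_integral (yd 1 - yd (1 - x))) {0..x}"
  proof (rule has_integral_eq[rotated])
    fix s assume "s \<in> {0..x}"
    then have "s \<in> {0..1}" using x by auto
    then have "q0 s = q0 (1 - s)" by (rule bspec[OF sym])
    then have "q0 (1 - s) = q0 s" by (rule HOL.sym)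
    then show "p (1 - s) * y (1 - s) = ((q0 s - lam) / a) *\<^sub>R y (1 - s)"
      by (simp add: p_def)
  qed
  then show "((\<lambda>t. ((q0 t - lam) / a) *\<^sub>R y (1 - t)) has_integral (- yd (1 - x) - - yd (1 - 0))) {0..x}"
    by simp
qed

lemma real_comb:
  fixes y1 yd1 y2 yd2 :: "real \<Rightarrow> real"
  assumes s1: "edge_sol a q0 lam y1 yd1" and s2: "edge_sol a q0 lam y2 yd2"
  shows "edge_sol a q0 lam (\<lambda>x. \<alpha> * y1 x + \<beta> * y2 x) (\<lambda>x. \<alpha> * yd1 x + \<beta> * yd2 x)"
  unfolding edge_sol_def sol_fun_eq
proof (intro ballI conjI)
  fix x :: real assume x: "x \<in> {0..1}"
  have h1: "(yd1 has_integral (y1 x - y1 0)) {0..x}" "((\<lambda>r. p r * y1 r) has_integral (yd1 x - yd1 0)) {0..x}"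
    using s1 x unfolding edge_sol_def sol_fun_eq by auto
  have h2: "(yd2 has_integral (y2 x - y2 0)) {0..x}" "((\<lambda>r. p r * y2 r) has_integral (yd2 x - yd2 0)) {0..x}"
    using s2 x unfolding edge_sol_def sol_fun_eq by auto
  have "((\<lambda>r. \<alpha> * yd1 r + \<beta> * yd2 r) has_integral (\<alpha> * (y1 x - y1 0) + \<beta> * (y2 x - y2 0))) {0..x}"
    by (intro has_integral_add has_integral_mult_right h1 h2)
  moreover have "\<alpha> * (y1 x - y1 0) + \<beta> * (y2 x - y2 0) = (\<alpha> * y1 x + \<beta> * y2 x) - (\<alpha> * y1 0 + \<beta> * y2 0)"
    by (simp add: algebra_simps)
  ultimately show "((\<lambda>x. \<alpha> * yd1 x + \<beta> * yd2 x) has_integral (\<alpha> * y1 x + \<beta> * y2 x - (\<alpha> * y1 0 + \<beta> * y2 0))) {0..x}"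
    by simp
  have "((\<lambda>r. \<alpha> * (p r * y1 r) + \<beta> * (p r * y2 r)) has_integral (\<alpha> * (yd1 x - yd1 0) + \<beta> * (yd2 x - yd2 0))) {0..x}"
    by (intro has_integral_add has_integral_mult_right h1 h2)
  moreover have "\<alpha> * (yd1 x - yd1 0) + \<beta> * (yd2 x - yd2 0) = (\<alpha> * yd1 x + \<beta> * yd2 x) - (\<alpha> * yd1 0 + \<beta> * yd2 0)"
    by (simp add: algebra_simps)
  moreover have "(\<lambda>r. \<alpha> * (p r * y1 r) + \<beta> * (p r * y2 r)) = (\<lambda>r. p r * (\<alpha> * y1 r + \<beta> * y2 r))"
    by (simp add: algebra_simps)
  ultimately show "((\<lambda>r. p r * (\<alpha> * y1 r + \<beta> * y2 r)) has_integral (\<alpha> * yd1 x + \<beta> * yd2 x - (\<alpha> * yd1 0 + \<beta> * yd2 0))) {0..x}"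
    by simp
qed

definition cc where "cc = fst (fund_c a q0 lam)"
definition ccd where "ccd = snd (fund_c a q0 lam)"
definition ss where "ss = fst (fund_s a q0 lam)"
definition ssd where "ssd = snd (fund_s a q0 lam)"

lemma fund_c_prop: "edge_sol a q0 lam cc ccd \<and> cc 0 = 1 \<and> ccd 0 = 0"
proof -
  obtain y yd :: "real \<Rightarrow> real" where "edge_sol a q0 lam y yd \<and> y 0 = 1 \<and> yd 0 = 0"
    using real_exists by blast
  then have "\<exists>pr::(real \<Rightarrow> real) \<times> (real \<Rightarrow> real). edge_sol a q0 lam (fst pr) (snd pr) \<and> fst pr 0 = 1 \<and> snd pr 0 = 0"
    by (intro exI[where x="(y, yd)"]) simp
  from someI_ex[OF this] show ?thesis unfolding cc_def ccd_def fund_c_def .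
qed

lemma fund_s_prop: "edge_sol a q0 lam ss ssd \<and> ss 0 = 0 \<and> ssd 0 = 1"
proof -
  obtain y yd :: "real \<Rightarrow> real" where "edge_sol a q0 lam y yd \<and> y 0 = 0 \<and> yd 0 = 1"
    using real_exists by blast
  then have "\<exists>pr::(real \<Rightarrow> real) \<times> (real \<Rightarrow> real). edge_sol a q0 lam (fst pr) (snd pr) \<and> fst pr 0 = 0 \<and> snd pr 0 = 1"
    by (intro exI[where x="(y, yd)"]) simp
  from someI_ex[OF this] show ?thesis unfolding ss_def ssd_def fund_s_def .
qed

lemma real_repr:
  fixes y yd :: "real \<Rightarrow> real"
  assumes sol: "edge_sol a q0 lam y yd" and x: "x \<in> {0..1}"
  shows "y x = y 0 * cc x + yd 0 * ss x \<and> yd x = y 0 * ccd x + yd 0 * ssd x"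
proof -
  have c: "edge_sol a q0 lam (\<lambda>x. y 0 * cc x + yd 0 * ss x) (\<lambda>x. y 0 * ccd x + yd 0 * ssd x)"
    using real_comb fund_c_prop fund_s_prop by blast
  show ?thesis
    using real_unique[OF sol c _ _ x] fund_c_prop fund_s_prop by simp
qed

lemma det1: "cc 1 * ssd 1 - ccd 1 * ss 1 = 1"
  using wronski[of cc ccd ss ssd 1] fund_c_prop fund_s_prop by simp

lemma sym_cs:
  assumes sym: "\<forall>x\<in>{0..1}. q0 x = q0 (1 - x)"
  shows "ssd 1 = cc 1"
proof -
  have r1: "edge_sol a q0 lam (\<lambda>x. cc (1 - x)) (\<lambda>x. - ccd (1 - x))"
    using reflect_sol[OF sym] fund_c_prop by blast
  have r2: "edge_sol a q0 lam (\<lambda>x. ss (1 - x)) (\<lambda>x. - ssd (1 - x))"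
    using reflect_sol[OF sym] fund_s_prop by blast
  have e1: "cc 1 * cc 1 - ccd 1 * ss 1 = 1"
    using real_repr[OF r1, of 1] fund_c_prop by simp
  have e2: "ss 1 * cc 1 - ssd 1 * ss 1 = 0"
    using real_repr[OF r2, of 1] fund_s_prop by simp
  have d: "cc 1 * ssd 1 - ccd 1 * ss 1 = 1" by (rule det1)
  have f1: "cc 1 * (cc 1 - ssd 1) = 0" using e1 d by algebra
  have f2: "ss 1 * (cc 1 - ssd 1) = 0" using e2 by algebra
  show ?thesis
  proof (rule ccontr)
    assume "ssd 1 \<noteq> cc 1"
    then have "cc 1 - ssd 1 \<noteq> 0" by simp
    then have "cc 1 = 0" "ss 1 = 0" using f1 f2 by auto
    then show False using d by simp
  qed
qed

lemma sol_ofreal: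
  fixes y yd :: "real \<Rightarrow> real"
  assumes sol: "edge_sol a q0 lam y yd"
  shows "edge_sol a q0 lam (\<lambda>x. complex_of_real (y x)) (\<lambda>x. complex_of_real (yd x))"
  unfolding edge_sol_def
proof (intro ballI conjI)
  fix x :: real assume x: "x \<in> {0..1}"
  have h: "(yd has_integral (y x - y 0)) {0..x}" "((\<lambda>r. p r * y r) has_integral (yd x - yd 0)) {0..x}"
    using sol x unfolding edge_sol_def sol_fun_eq by auto
  show "((\<lambda>x. complex_of_real (yd x)) has_integral (complex_of_real (y x) - complex_of_real (y 0))) {0..x}"
    using has_integral_linear[OF h(1) bounded_linear_of_real] by (simp add: o_def)
  have "((\<lambda>r. complex_of_real (p r * y r)) has_integral (complex_of_real (yd x) - complex_of_real (yd 0))) {0..x}"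
    using has_integral_linear[OF h(2) bounded_linear_of_real] by (simp add: o_def)
  moreover have "(\<lambda>r. complex_of_real (p r * y r)) = (\<lambda>t. ((q0 t - lam) / a) *\<^sub>R complex_of_real (y t))"
    by (simp add: fun_eq_iff p_def scaleR_conv_of_real)
  ultimately show "((\<lambda>t. ((q0 t - lam) / a) *\<^sub>R complex_of_real (y t)) has_integral (complex_of_real (yd x) - complex_of_real (yd 0))) {0..x}"
    by simp
qed

lemma sol_cscale:
  fixes u ud :: "real \<Rightarrow> complex"
  assumes sol: "edge_sol a q0 lam u ud"
  shows "edge_sol a q0 lam (\<lambda>x. c * u x) (\<lambda>x. c * ud x)"
  unfolding edge_sol_def
proof (intro ballI conjI)
  fix x :: real assume x: "x \<in> {0..1}"
  have h: "(ud has_integral (u x - u 0)) {0..x}" "((\<lambda>t. ((q0 t - lam) / a) *\<^sub>R u t) has_integral (ud x - ud 0)) {0..x}"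
    using sol x unfolding edge_sol_def by auto
  show "((\<lambda>x. c * ud x) has_integral (c * u x - c * u 0)) {0..x}"
    using has_integral_mult_right[OF h(1), of c] by (simp add: algebra_simps)
  have "((\<lambda>t. c * (((q0 t - lam) / a) *\<^sub>R u t)) has_integral (c * ud x - c * ud 0)) {0..x}"
    using has_integral_mult_right[OF h(2), of c] by (simp add: algebra_simps)
  moreover have "(\<lambda>t. c * (((q0 t - lam) / a) *\<^sub>R u t)) = (\<lambda>t. ((q0 t - lam) / a) *\<^sub>R (c * u t))"
    by (simp add: fun_eq_iff)
  ultimately show "((\<lambda>t. ((q0 t - lam) / a) *\<^sub>R (c * u t)) has_integral (c * ud x - c * ud 0)) {0..x}"
    by simp
qed

lemma sol_cadd:
  fixes u1 ud1 u2 ud2 :: "real \<Rightarrow> complex"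
  assumes s1: "edge_sol a q0 lam u1 ud1" and s2: "edge_sol a q0 lam u2 ud2"
  shows "edge_sol a q0 lam (\<lambda>x. u1 x + u2 x) (\<lambda>x. ud1 x + ud2 x)"
  unfolding edge_sol_def
proof (intro ballI conjI)
  fix x :: real assume x: "x \<in> {0..1}"
  have h1: "(ud1 has_integral (u1 x - u1 0)) {0..x}" "((\<lambda>t. ((q0 t - lam) / a) *\<^sub>R u1 t) has_integral (ud1 x - ud1 0)) {0..x}"
    using s1 x unfolding edge_sol_def by auto
  have h2: "(ud2 has_integral (u2 x - u2 0)) {0..x}" "((\<lambda>t. ((q0 t - lam) / a) *\<^sub>R u2 t) has_integral (ud2 x - ud2 0)) {0..x}"
    using s2 x unfolding edge_sol_def by auto
  show "((\<lambda>x. ud1 x + ud2 x) has_integral (u1 x + u2 x - (u1 0 + u2 0))) {0..x}"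
    using has_integral_add[OF h1(1) h2(1)] by (simp add: algebra_simps)
  have "((\<lambda>t. ((q0 t - lam) / a) *\<^sub>R u1 t + ((q0 t - lam) / a) *\<^sub>R u2 t) has_integral (ud1 x + ud2 x - (ud1 0 + ud2 0))) {0..x}"
    using has_integral_add[OF h1(2) h2(2)] by (simp add: algebra_simps)
  then show "((\<lambda>t. ((q0 t - lam) / a) *\<^sub>R (u1 t + u2 t)) has_integral (ud1 x + ud2 x - (ud1 0 + ud2 0))) {0..x}"
    by (simp add: scaleR_right_distrib)
qed

lemma sol_Re:
  fixes u ud :: "real \<Rightarrow> complex"
  assumes sol: "edge_sol a q0 lam u ud"
  shows "edge_sol a q0 lam (\<lambda>x. Re (u x)) (\<lambda>x. Re (ud x))"
  unfolding edge_sol_def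
proof (intro ballI conjI)
  fix x :: real assume x: "x \<in> {0..1}"
  have h: "(ud has_integral (u x - u 0)) {0..x}" "((\<lambda>t. ((q0 t - lam) / a) *\<^sub>R u t) has_integral (ud x - ud 0)) {0..x}"
    using sol x unfolding edge_sol_def by auto
  show "((\<lambda>x. Re (ud x)) has_integral (Re (u x) - Re (u 0))) {0..x}"
    using has_integral_linear[OF h(1) bounded_linear_Re] by (simp add: o_def)
  show "((\<lambda>t. ((q0 t - lam) / a) *\<^sub>R Re (u t)) has_integral (Re (ud x) - Re (ud 0))) {0..x}"
    using has_integral_linear[OF h(2) bounded_linear_Re] by (simp add: o_def)
qed

lemma sol_Im:
  fixes u ud :: "real \<Rightarrow> complex"
  assumes sol: "edge_sol a q0 lam u ud"
  shows "edge_sol a q0 lam (\<lambda>x. Im (u x)) (\<lambda>x. Im (ud x))"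
  unfolding edge_sol_def
proof (intro ballI conjI)
  fix x :: real assume x: "x \<in> {0..1}"
  have h: "(ud has_integral (u x - u 0)) {0..x}" "((\<lambda>t. ((q0 t - lam) / a) *\<^sub>R u t) has_integral (ud x - ud 0)) {0..x}"
    using sol x unfolding edge_sol_def by auto
  show "((\<lambda>x. Im (ud x)) has_integral (Im (u x) - Im (u 0))) {0..x}"
    using has_integral_linear[OF h(1) bounded_linear_Im] by (simp add: o_def)
  show "((\<lambda>t. ((q0 t - lam) / a) *\<^sub>R Im (u t)) has_integral (Im (ud x) - Im (ud 0))) {0..x}"
    using has_integral_linear[OF h(2) bounded_linear_Im] by (simp add: o_def)
qed

lemma cplx_repr:
  fixes u ud :: "real \<Rightarrow> complex"
  assumes sol: "edge_sol a q0 lam u ud" and x: "x \<in> {0..1}"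
  shows "u x = u 0 * of_real (cc x) + ud 0 * of_real (ss x) \<and> ud x = u 0 * of_real (ccd x) + ud 0 * of_real (ssd x)"
proof -
  have r: "Re (u x) = Re (u 0) * cc x + Re (ud 0) * ss x \<and> Re (ud x) = Re (u 0) * ccd x + Re (ud 0) * ssd x"
    using real_repr[OF sol_Re[OF sol] x] .
  have i: "Im (u x) = Im (u 0) * cc x + Im (ud 0) * ss x \<and> Im (ud x) = Im (u 0) * ccd x + Im (ud 0) * ssd x"
    using real_repr[OF sol_Im[OF sol] x] .
  show ?thesis by (intro conjI complex_eqI) (simp_all add: r i)
qed

end

lemma alg_fwd:
  fixes w0 w1 b1 b2 b3 e1 e2 f1 f2 A D1 D0 C1 F Lm Ai D0i :: complex
  assumes Ai: "A * Ai = 1" and D0i: "D0 * D0i = 1" and e1: "e1 * f1 = 1" and e2: "e2 * f2 = 1"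
    and W: "C1 * D0 - D1 * D1 = -1" and Fd: "3 * A * F = 3 * A * D1 - Lm * D0"
    and ha: "- A * (b1 + b2 + b3) = Lm * w0"
    and hb: "w0 * D1 + b1 * D0 = w1"
    and hc: "e1 * (w0 * D1 + b2 * D0) = w1"
    and hd: "e2 * (w0 * D1 + b3 * D0) = w1"
    and he: "A * (w0 * C1 + b1 * D1 + e1 * (w0 * C1 + b2 * D1) + e2 * (w0 * C1 + b3 * D1)) = Lm * w1"
  shows "(1 + f1 + f2) * w1 = 3 * F * w0" "(1 + e1 + e2) * w0 = 3 * F * w1"
proof -
  show "(1 + f1 + f2) * w1 = 3 * F * w0" using Ai D0i e1 e2 Fd ha hb hc hd by algebra
  show "(1 + e1 + e2) * w0 = 3 * F * w1" using Ai D0i e1 e2 Fd W he hb hc hd by algebra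
qed

lemma alg_bwd:
  fixes w0 w1 b1 b2 b3 e1 e2 f1 f2 A D1 D0 C1 F Lm Ai D0i :: complex
  assumes Ai: "A * Ai = 1" and D0i: "D0 * D0i = 1" and e1: "e1 * f1 = 1" and e2: "e2 * f2 = 1"
    and W: "C1 * D0 - D1 * D1 = -1" and Fd: "3 * A * F = 3 * A * D1 - Lm * D0"
    and i: "(1 + f1 + f2) * w1 = 3 * F * w0" and ii: "(1 + e1 + e2) * w0 = 3 * F * w1"
    and b1: "b1 * D0 = w1 - w0 * D1" and b2: "b2 * D0 = f1 * w1 - w0 * D1" and b3: "b3 * D0 = f2 * w1 - w0 * D1"
  shows "- A * (b1 + b2 + b3) = Lm * w0"
    and "w0 * D1 + b1 * D0 = w1"
    and "e1 * (w0 * D1 + b2 * D0) = w1"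
    and "e2 * (w0 * D1 + b3 * D0) = w1"
    and "A * (w0 * C1 + b1 * D1 + e1 * (w0 * C1 + b2 * D1) + e2 * (w0 * C1 + b3 * D1)) = Lm * w1"
proof -
  show "- A * (b1 + b2 + b3) = Lm * w0" using Ai D0i Fd i b1 b2 b3 by algebra
  show "w0 * D1 + b1 * D0 = w1" using b1 by (simp add: algebra_simps)
  show "e1 * (w0 * D1 + b2 * D0) = w1" using b2 e1 by algebra
  show "e2 * (w0 * D1 + b3 * D0) = w1" using b3 e2 by algebra
  show "A * (w0 * C1 + b1 * D1 + e1 * (w0 * C1 + b2 * D1) + e2 * (w0 * C1 + b3 * D1)) = Lm * w1"
    using Ai D0i e1 e2 W Fd ii b1 b2 b3 by algebra
qed


lemma e_f: "exp (\<i> * complex_of_real t) * exp (- \<i> * complex_of_real t) = 1"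
  by (simp add: exp_add[symmetric])

lemma cnj_f: "cnj (exp (- \<i> * complex_of_real t)) = exp (\<i> * complex_of_real t)"
  by (simp add: exp_cnj)

lemma cnj_S: "cnj (Sfun th1 th2) = 1 + exp (\<i> * complex_of_real th1) + exp (\<i> * complex_of_real th2)"
  unfolding Sfun_def complex_cnj_add complex_cnj_one cnj_f ..

context ode begin

lemma zero_sol:
  fixes y yd :: "real \<Rightarrow> real"
  assumes sol: "edge_sol a q0 lam y yd" and z: "\<forall>x\<in>{0..1}. y x = 0"
  shows "yd 0 = 0"
proof -
  have c: "yd x = yd 0" if x: "x \<in> {0..1}" for x
  proof -
    have "((\<lambda>r. p r * y r) has_integral (yd x - yd 0)) {0..x}"
      using incr(2)[OF sol, of 0 x] x by auto
    then have "((\<lambda>r. 0::real) has_integral (yd x - yd 0)) {0..x}"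
      by (rule has_integral_eq[rotated]) (use z x in auto)
    then show ?thesis using has_integral_unique[OF _ has_integral_0] by fastforce
  qed
  have hy: "(yd has_integral (y 1 - y 0)) {0..1}" using sol unfolding edge_sol_def by auto
  have "(yd has_integral (y 1 - y 0)) {0..1} = ((\<lambda>r::real. yd 0) has_integral (y 1 - y 0)) {0..1}"
    by (rule has_integral_cong, rule c, assumption)
  then have "((\<lambda>r::real. yd 0) has_integral (y 1 - y 0)) {0..1}" using hy by simp
  moreover have "((\<lambda>r::real. yd 0) has_integral (Henstock_Kurzweil_Integration.content {0..1::real} *\<^sub>R yd 0)) {0..1}"
    by (rule has_integral_const_real)
  ultimately have "y 1 - y 0 = Henstock_Kurzweil_Integration.content {0..1::real} *\<^sub>R yd 0" by (rule has_integral_unique)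
  then show ?thesis using z by simp
qed

lemma D_vals:
  "D1 a rho q0 lam = cc 1 + rho * ccd 1" "D2 a rho q0 lam = ss 1 + rho * ssd 1"
  "D0 a rho q0 lam = D2 a rho q0 lam + rho * D1 a rho q0 lam"
  by (simp_all add: D1_def D2_def D0_def cc_def ccd_def ss_def ssd_def)

lemma D0_ne:
  assumes ns: "lam \<notin> Sigma0 a rho q0"
  shows "D0 a rho q0 lam \<noteq> 0"
proof
  assume D: "D0 a rho q0 lam = 0"
  have rs: "edge_sol a q0 lam (\<lambda>x. rho * cc x + 1 * ss x) (\<lambda>x. rho * ccd x + 1 * ssd x)"
    using real_comb fund_c_prop fund_s_prop by blast
  have cs: "edge_sol a q0 lam (\<lambda>x. complex_of_real (rho * cc x + 1 * ss x)) (\<lambda>x. complex_of_real (rho * ccd x + 1 * ssd x))"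
    by (rule sol_ofreal[OF rs])
  have nz: "\<exists>x\<in>{0..1}. rho * cc x + 1 * ss x \<noteq> 0"
  proof (rule ccontr)
    assume "\<not> ?thesis"
    then have "\<forall>x\<in>{0..1}. rho * cc x + 1 * ss x = 0" by blast
    from zero_sol[OF rs this] show False using fund_c_prop fund_s_prop by simp
  qed
  have "lam \<in> Sigma0 a rho q0"
    unfolding Sigma0_def
  proof (intro CollectI exI conjI)
    show "edge_sol a q0 lam (\<lambda>x. complex_of_real (rho * cc x + 1 * ss x)) (\<lambda>x. complex_of_real (rho * ccd x + 1 * ssd x))"
      by (rule cs)
    show "complex_of_real (rho * cc 0 + 1 * ss 0) - rho *\<^sub>R complex_of_real (rho * ccd 0 + 1 * ssd 0) = 0"
      using fund_c_prop fund_s_prop by (simp add: scaleR_conv_of_real)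
    have "rho * cc 1 + 1 * ss 1 + rho * (rho * ccd 1 + 1 * ssd 1) = D0 a rho q0 lam"
      unfolding D_vals by (simp add: algebra_simps)
    then show "complex_of_real (rho * cc 1 + 1 * ss 1) + rho *\<^sub>R complex_of_real (rho * ccd 1 + 1 * ssd 1) = 0"
      using D by (simp add: scaleR_conv_of_real flip: of_real_mult of_real_add)
    show "\<exists>x\<in>{0..1}. complex_of_real (rho * cc x + 1 * ss x) \<noteq> 0" using nz by (simp only: of_real_eq_0_iff)
  qed
  then show False using ns by blast
qed

lemma W_rel:
  assumes sym: "\<forall>x\<in>{0..1}. q0 x = q0 (1 - x)"
  shows "ccd 1 * D0 a rho q0 lam - D1 a rho q0 lam * D1 a rho q0 lam = -1"
proof -
  have s: "ssd 1 = cc 1" by (rule sym_cs[OF sym])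
  have d: "cc 1 * cc 1 - ccd 1 * ss 1 = 1" using det1 s by simp
  have e: "D0 a rho q0 lam = ss 1 + rho * cc 1 + rho * (cc 1 + rho * ccd 1)"
    unfolding D_vals s ..
  show ?thesis unfolding e D_vals(1) using d by algebra
qed

lemma bc_vals:
  fixes u ud :: "real \<Rightarrow> complex"
  assumes sym: "\<forall>x\<in>{0..1}. q0 x = q0 (1 - x)" and sol: "edge_sol a q0 lam u ud"
  shows "u 1 + rho *\<^sub>R ud 1 = (u 0 - rho *\<^sub>R ud 0) * of_real (D1 a rho q0 lam) + ud 0 * of_real (D0 a rho q0 lam)"
    and "ud 1 = (u 0 - rho *\<^sub>R ud 0) * of_real (ccd 1) + ud 0 * of_real (D1 a rho q0 lam)"
proof -
  have s: "ssd 1 = cc 1" by (rule sym_cs[OF sym])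
  have r: "u 1 = u 0 * of_real (cc 1) + ud 0 * of_real (ss 1)" "ud 1 = u 0 * of_real (ccd 1) + ud 0 * of_real (ssd 1)"
    using cplx_repr[OF sol, of 1] by auto
  show "u 1 + rho *\<^sub>R ud 1 = (u 0 - rho *\<^sub>R ud 0) * of_real (D1 a rho q0 lam) + ud 0 * of_real (D0 a rho q0 lam)"
    unfolding r D_vals s by (simp add: scaleR_conv_of_real algebra_simps)
  show "ud 1 = (u 0 - rho *\<^sub>R ud 0) * of_real (ccd 1) + ud 0 * of_real (D1 a rho q0 lam)"
    unfolding r D_vals s by (simp add: scaleR_conv_of_real algebra_simps)
qed

end

context ode begin

lemma spec_iff:
  assumes sym: "\<forall>x\<in>{0..1}. q0 x = q0 (1 - x)" and ns: "lam \<notin> Sigma0 a rho q0"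
  shows "lam \<in> spec_theta a rho m q0 th1 th2 \<longleftrightarrow>
    (D1 a rho q0 lam - lam * m / (3 * a) * D0 a rho q0 lam = cmod (Sfun th1 th2) / 3 \<or>
     D1 a rho q0 lam - lam * m / (3 * a) * D0 a rho q0 lam = - (cmod (Sfun th1 th2) / 3))"
proof -
  define DD1 where "DD1 = D1 a rho q0 lam"
  define DD0 where "DD0 = D0 a rho q0 lam"
  define F where "F = DD1 - lam * m / (3 * a) * DD0"
  define e1 where "e1 = exp (\<i> * complex_of_real th1)"
  define e2 where "e2 = exp (\<i> * complex_of_real th2)"
  define f1 where "f1 = exp (- \<i> * complex_of_real th1)"
  define f2 where "f2 = exp (- \<i> * complex_of_real th2)"
  define C1 where "C1 = complex_of_real (ccd 1)"
  have S: "Sfun th1 th2 = 1 + f1 + f2" unfolding Sfun_def f1_def f2_def ..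
  have cS: "cnj (Sfun th1 th2) = 1 + e1 + e2" using cnj_S unfolding e1_def e2_def .
  have ef1: "e1 * f1 = 1" unfolding e1_def f1_def by (rule e_f)
  have ef2: "e2 * f2 = 1" unfolding e2_def f2_def by (rule e_f)
  have e1n: "e1 \<noteq> 0" "e2 \<noteq> 0" unfolding e1_def e2_def by auto
  have D0n: "DD0 \<noteq> 0" unfolding DD0_def by (rule D0_ne[OF ns])
  have W: "C1 * complex_of_real DD0 - complex_of_real DD1 * complex_of_real DD1 = -1"
  proof -
    have "ccd 1 * DD0 - DD1 * DD1 = -1" unfolding DD0_def DD1_def by (rule W_rel[OF sym])
    then have "complex_of_real (ccd 1 * DD0 - DD1 * DD1) = complex_of_real (-1)" by simp
    then show ?thesis unfolding C1_def by simp
  qed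
  have an: "a \<noteq> 0" using apos by simp
  have Fr: "3 * a * F = 3 * a * DD1 - (lam * m) * DD0"
    unfolding F_def using an by (simp add: algebra_simps)
  have Fd: "3 * complex_of_real a * complex_of_real F = 3 * complex_of_real a * complex_of_real DD1 - complex_of_real (lam * m) * complex_of_real DD0"
  proof -
    have "complex_of_real (3 * a * F) = complex_of_real (3 * a * DD1 - (lam * m) * DD0)" using Fr by simp
    then show ?thesis by simp
  qed
  have Ai: "complex_of_real a * complex_of_real (1 / a) = 1" using an by (simp flip: of_real_mult)
  have D0i: "complex_of_real DD0 * complex_of_real (1 / DD0) = 1" using D0n by (simp flip: of_real_mult)
  have nS: "complex_of_real ((cmod (Sfun th1 th2))^2) = (1 + f1 + f2) * (1 + e1 + e2)"
    using complex_norm_square[of "Sfun th1 th2"] S cS by simp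
  have bc1: "u 1 + rho *\<^sub>R ud 1 = (u 0 - rho *\<^sub>R ud 0) * complex_of_real DD1 + ud 0 * complex_of_real DD0"
    and bc2: "ud 1 = (u 0 - rho *\<^sub>R ud 0) * C1 + ud 0 * complex_of_real DD1"
    if "edge_sol a q0 lam u ud" for u ud :: "real \<Rightarrow> complex"
    using bc_vals[OF sym that, of rho] unfolding DD1_def DD0_def C1_def by auto
  have sq: "(F = cmod (Sfun th1 th2) / 3 \<or> F = - (cmod (Sfun th1 th2) / 3)) \<longleftrightarrow> (cmod (Sfun th1 th2))^2 = 9 * F^2"
  proof -
    have "(F = cmod (Sfun th1 th2) / 3 \<or> F = - (cmod (Sfun th1 th2) / 3)) \<longleftrightarrow> F^2 = (cmod (Sfun th1 th2) / 3)^2"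
      using power2_eq_iff by blast
    also have "\<dots> \<longleftrightarrow> (cmod (Sfun th1 th2))^2 = 9 * F^2" by (auto simp: power_divide)
    finally show ?thesis .
  qed
  have "lam \<in> spec_theta a rho m q0 th1 th2 \<longleftrightarrow> (cmod (Sfun th1 th2))^2 = 9 * F^2"
  proof
    assume "lam \<in> spec_theta a rho m q0 th1 th2"
    then obtain u1 u1d u2 u2d u3 u3d w0 w1 where
      s1: "edge_sol a q0 lam u1 u1d" and s2: "edge_sol a q0 lam u2 u2d" and s3: "edge_sol a q0 lam u3 u3d"
      and i1: "u1 0 - rho *\<^sub>R u1d 0 = w0" and i2: "u2 0 - rho *\<^sub>R u2d 0 = w0" and i3: "u3 0 - rho *\<^sub>R u3d 0 = w0"
      and ha0: "- a *\<^sub>R (u1d 0 + u2d 0 + u3d 0) = (lam * m) *\<^sub>R w0"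
      and o1: "u1 1 + rho *\<^sub>R u1d 1 = w1"
      and o2: "e1 * (u2 1 + rho *\<^sub>R u2d 1) = w1"
      and o3: "e2 * (u3 1 + rho *\<^sub>R u3d 1) = w1"
      and he0: "a *\<^sub>R (u1d 1 + e1 * u2d 1 + e2 * u3d 1) = (lam * m) *\<^sub>R w1"
      and nt: "(\<exists>x\<in>{0..1}. u1 x \<noteq> 0 \<or> u2 x \<noteq> 0 \<or> u3 x \<noteq> 0) \<or> w0 \<noteq> 0 \<or> w1 \<noteq> 0"
      unfolding spec_theta_def mem_Collect_eq e1_def[symmetric] e2_def[symmetric] by blast
    have ha: "- complex_of_real a * (u1d 0 + u2d 0 + u3d 0) = complex_of_real (lam * m) * w0"
      using ha0 by (simp add: scaleR_conv_of_real)
    have hb: "w0 * complex_of_real DD1 + u1d 0 * complex_of_real DD0 = w1"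
      using o1 bc1[OF s1] i1 by simp
    have hc: "e1 * (w0 * complex_of_real DD1 + u2d 0 * complex_of_real DD0) = w1"
      using o2 bc1[OF s2] i2 by simp
    have hd: "e2 * (w0 * complex_of_real DD1 + u3d 0 * complex_of_real DD0) = w1"
      using o3 bc1[OF s3] i3 by simp
    have he: "complex_of_real a * (w0 * C1 + u1d 0 * complex_of_real DD1 + e1 * (w0 * C1 + u2d 0 * complex_of_real DD1) + e2 * (w0 * C1 + u3d 0 * complex_of_real DD1)) = complex_of_real (lam * m) * w1"
      using he0 bc2[OF s1] bc2[OF s2] bc2[OF s3] i1 i2 i3 by (simp add: scaleR_conv_of_real)
    have r1: "(1 + f1 + f2) * w1 = 3 * complex_of_real F * w0"
      and r2: "(1 + e1 + e2) * w0 = 3 * complex_of_real F * w1"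
      using alg_fwd[OF Ai D0i ef1 ef2 W Fd ha hb hc hd he] by auto
    have wn: "w0 \<noteq> 0 \<or> w1 \<noteq> 0"
    proof (rule ccontr)
      assume "\<not> (w0 \<noteq> 0 \<or> w1 \<noteq> 0)"
      then have w: "w0 = 0" "w1 = 0" by auto
      have b1: "u1d 0 = 0" using hb w D0n by simp
      have b2: "u2d 0 = 0" using hc w D0n e1n by simp
      have b3: "u3d 0 = 0" using hd w D0n e1n by simp
      have z: "u 0 = 0" "ud 0 = 0" if "u 0 - rho *\<^sub>R ud 0 = 0" "ud 0 = 0" for u ud :: "real \<Rightarrow> complex"
        using that by auto
      have "u1 x = 0 \<and> u2 x = 0 \<and> u3 x = 0" if x: "x \<in> {0..1}" for x
        using cplx_repr[OF s1 x] cplx_repr[OF s2 x] cplx_repr[OF s3 x] i1 i2 i3 w b1 b2 b3 by simp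
      then show False using nt w by auto
    qed
    have c0: "complex_of_real ((cmod (Sfun th1 th2))^2) * w0 = complex_of_real (9 * F^2) * w0"
      unfolding nS using r1 r2 by (simp add: power2_eq_square) algebra
    have c1: "complex_of_real ((cmod (Sfun th1 th2))^2) * w1 = complex_of_real (9 * F^2) * w1"
      unfolding nS using r1 r2 by (simp add: power2_eq_square) algebra
    from wn have "complex_of_real ((cmod (Sfun th1 th2))^2) = complex_of_real (9 * F^2)"
      using c0 c1 by auto
    then show "(cmod (Sfun th1 th2))^2 = 9 * F^2" by (simp only: of_real_eq_iff)
  next
    assume sqe: "(cmod (Sfun th1 th2))^2 = 9 * F^2"
    have nS9: "(1 + f1 + f2) * (1 + e1 + e2) = 3 * complex_of_real F * (3 * complex_of_real F)"
    proof -
      have "(1 + f1 + f2) * (1 + e1 + e2) = complex_of_real (9 * F^2)" using nS unfolding sqe by simp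
      also have "\<dots> = 3 * complex_of_real F * (3 * complex_of_real F)" by (simp add: power2_eq_square)
      finally show ?thesis .
    qed
    obtain w0 w1 where r1: "(1 + f1 + f2) * w1 = 3 * complex_of_real F * w0"
      and r2: "(1 + e1 + e2) * w0 = 3 * complex_of_real F * w1" and wn: "w0 \<noteq> 0 \<or> w1 \<noteq> 0"
    proof (cases "1 + f1 + f2 = 0")
      case True
      then have "cmod (Sfun th1 th2) = 0" using S by simp
      then have F0: "F = 0" using sqe by simp
      have "1 + e1 + e2 = 0" using True S cS by (metis complex_cnj_zero)
      then show ?thesis using that[of 1 0] True F0 by simp
    next
      case False
      have q1: "(1 + f1 + f2) * (3 * complex_of_real F) = 3 * complex_of_real F * (1 + f1 + f2)" by simp
      have q2: "(1 + e1 + e2) * (1 + f1 + f2) = 3 * complex_of_real F * (3 * complex_of_real F)"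
        using nS9 by (simp add: mult.commute)
      have q3: "1 + f1 + f2 \<noteq> 0 \<or> 3 * complex_of_real F \<noteq> 0" using False by simp
      show ?thesis by (rule that[OF q1 q2 q3])
    qed
    define D0c where "D0c = complex_of_real DD0"
    define D1c where "D1c = complex_of_real DD1"
    define b1 where "b1 = (w1 - w0 * D1c) * complex_of_real (1 / DD0)"
    define b2 where "b2 = (f1 * w1 - w0 * D1c) * complex_of_real (1 / DD0)"
    define b3 where "b3 = (f2 * w1 - w0 * D1c) * complex_of_real (1 / DD0)"
    have hb1: "b1 * D0c = w1 - w0 * D1c" unfolding b1_def D0c_def using D0i D0n by (simp add: mult.assoc mult.commute[of "complex_of_real (1 / DD0)"])
    have hb2: "b2 * D0c = f1 * w1 - w0 * D1c" unfolding b2_def D0c_def using D0i D0n by (simp add: mult.assoc mult.commute[of "complex_of_real (1 / DD0)"])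
    have hb3: "b3 * D0c = f2 * w1 - w0 * D1c" unfolding b3_def D0c_def using D0i D0n by (simp add: mult.assoc mult.commute[of "complex_of_real (1 / DD0)"])
    note A = alg_bwd[OF Ai D0i ef1 ef2 W Fd r1 r2 hb1[unfolded D0c_def D1c_def] hb2[unfolded D0c_def D1c_def] hb3[unfolded D0c_def D1c_def]]
    have cs: "edge_sol a q0 lam (\<lambda>x. complex_of_real (cc x)) (\<lambda>x. complex_of_real (ccd x))"
      using sol_ofreal fund_c_prop by blast
    have ssl: "edge_sol a q0 lam (\<lambda>x. complex_of_real (ss x)) (\<lambda>x. complex_of_real (ssd x))"
      using sol_ofreal fund_s_prop by blast
    have mk: "edge_sol a q0 lam (\<lambda>x. (w0 + complex_of_real rho * b) * complex_of_real (cc x) + b * complex_of_real (ss x))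
                 (\<lambda>x. (w0 + complex_of_real rho * b) * complex_of_real (ccd x) + b * complex_of_real (ssd x))" for b
      by (rule sol_cadd[OF sol_cscale[OF cs] sol_cscale[OF ssl]])
    define U where "U b = (\<lambda>x. (w0 + complex_of_real rho * b) * complex_of_real (cc x) + b * complex_of_real (ss x))" for b
    define Ud where "Ud b = (\<lambda>x. (w0 + complex_of_real rho * b) * complex_of_real (ccd x) + b * complex_of_real (ssd x))" for b
    have mkU: "edge_sol a q0 lam (U b) (Ud b)" for b unfolding U_def Ud_def by (rule mk)
    have U0: "U b 0 - rho *\<^sub>R Ud b 0 = w0" "Ud b 0 = b" for b
      unfolding U_def Ud_def using fund_c_prop fund_s_prop by (simp_all add: scaleR_conv_of_real)
    have U1: "U b 1 + rho *\<^sub>R Ud b 1 = w0 * D1c + b * D0c" for b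
      using bc1[OF mkU, of b] U0[of b] unfolding D1c_def D0c_def by simp
    have Ud1: "Ud b 1 = w0 * C1 + b * D1c" for b
      using bc2[OF mkU, of b] U0[of b] unfolding D1c_def by simp
    show "lam \<in> spec_theta a rho m q0 th1 th2"
      unfolding spec_theta_def mem_Collect_eq
    proof (intro exI conjI)
      show "edge_sol a q0 lam (U b1) (Ud b1)" "edge_sol a q0 lam (U b2) (Ud b2)" "edge_sol a q0 lam (U b3) (Ud b3)"
        by (rule mkU)+
      show "U b1 0 - rho *\<^sub>R Ud b1 0 = w0" "U b2 0 - rho *\<^sub>R Ud b2 0 = w0" "U b3 0 - rho *\<^sub>R Ud b3 0 = w0"
        by (rule U0)+
      show "- a *\<^sub>R (Ud b1 0 + Ud b2 0 + Ud b3 0) = (lam * m) *\<^sub>R w0"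
        using A(1) unfolding U0(2) by (simp add: scaleR_conv_of_real)
      show "U b1 1 + rho *\<^sub>R Ud b1 1 = w1"
        using A(2) unfolding U1 D1c_def D0c_def by simp
      show "exp (\<i> * complex_of_real th1) * (U b2 1 + rho *\<^sub>R Ud b2 1) = w1"
        using A(3) unfolding U1 D1c_def D0c_def e1_def by simp
      show "exp (\<i> * complex_of_real th2) * (U b3 1 + rho *\<^sub>R Ud b3 1) = w1"
        using A(4) unfolding U1 D1c_def D0c_def e2_def by simp
      show "a *\<^sub>R (Ud b1 1 + exp (\<i> * complex_of_real th1) * Ud b2 1 + exp (\<i> * complex_of_real th2) * Ud b3 1) = (lam * m) *\<^sub>R w1"
        using A(5) unfolding Ud1 D1c_def e1_def e2_def by (simp add: scaleR_conv_of_real)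
      show "(\<exists>x\<in>{0..1}. U b1 x \<noteq> 0 \<or> U b2 x \<noteq> 0 \<or> U b3 x \<noteq> 0) \<or> w0 \<noteq> 0 \<or> w1 \<noteq> 0"
        using wn by blast
    qed
  qed
  then show ?thesis using sq unfolding F_def DD1_def DD0_def by simp
qed

end


theorem mainTheorem2:
  fixes a kinv m lam :: real and q0 :: "real \<Rightarrow> real"
  assumes "a > 0" and "kinv \<ge> 0" and "m \<ge> 0"
    and "q0 \<in> borel_measurable (lebesgue_on {0..1})"
    and "\<exists>B. \<forall>x\<in>{0..1}. \<bar>q0 x\<bar> \<le> B"
    and "\<forall>x\<in>{0..1}. q0 x = q0 (1 - x)"
    and "lam \<notin> Sigma0 a (a * kinv) q0"
  shows "lam \<in> (\<Union>th1\<in>{-pi..pi}. \<Union>th2\<in>{-pi..pi}. spec_theta a (a * kinv) m q0 th1 th2) \<longleftrightarrow>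
    (\<exists>th1\<in>{-pi..pi}. \<exists>th2\<in>{-pi..pi}.
       D1 a (a * kinv) q0 lam - lam * m / (3 * a) * D0 a (a * kinv) q0 lam = cmod (Sfun th1 th2) / 3 \<or>
       D1 a (a * kinv) q0 lam - lam * m / (3 * a) * D0 a (a * kinv) q0 lam = - (cmod (Sfun th1 th2) / 3))"
proof -
  interpret ode a q0 lam by unfold_locales (use assms(1,4,5) in auto)
  have e: "lam \<in> spec_theta a (a * kinv) m q0 th1 th2 \<longleftrightarrow>
    (D1 a (a * kinv) q0 lam - lam * m / (3 * a) * D0 a (a * kinv) q0 lam = cmod (Sfun th1 th2) / 3 \<or>
     D1 a (a * kinv) q0 lam - lam * m / (3 * a) * D0 a (a * kinv) q0 lam = - (cmod (Sfun th1 th2) / 3))" for th1 th2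
    by (rule spec_iff[OF assms(6) assms(7)])
  show ?thesis unfolding UN_iff e by (rule refl)
qed

end
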